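(* Let $R$ be a root system in $\mathbb{R}^N$, let $R'=\{\alpha_1,\dots,\alpha_n\}$ be a positive orthogonal subsystem of $R$ consisting of $n$ vectors, and let $\kappa=(\kappa_1,\dots,\kappa_n)\in\mathbb{C}^n$ with $\operatorname{Re}\kappa_j>0$ for all $j$. For $\xi\in\mathbb{R}^N$ let $$(T_\xi f)(x)=\partial_\xi f(x)+\sum_{j=1}^n\kappa_j\langle\alpha_j,\xi\rangle\frac{f(x)-f(\tau_{\alpha_j}x)}{\langle x,\alpha_j\rangle},\qquad \tau_{\alpha_j}(x)=x-\frac{\langle x,\alpha_j\rangle}{|\alpha_j|^2}\alpha_j.$$ Define $h:\mathbb{R}^n\times\mathbb{R}^N\to\mathbb{R}^N$ by $h(t,x)=x+\sum_{j=1}^n(t_j-1)\frac{\langle x,\alpha_j\rangle}{|\alpha_j|^2}\alpha_j$, and for $f\in C^\infty(\mathbb{R}^N)$ $$\chi_\kappa(f)(x)=\frac{1}{\Gamma(\kappa)}\int_{[0,1]^n}f(h(t,x))\,w(t)\,dt,\qquad w(t)=\prod_{j=1}^n(1-t_j)^{\kappa_j-1},\quad \Gamma(\kappa)=\prod_{j=1}^n\Gamma(\kappa_j).$$ Then for every $f\in C^\infty(\mathbb{R}^N)$ and $\xi\in\mathbb{R}^N$, $$T_\xi(\chi_\kappa f)(x)=\chi_\kappa(\partial_\xi f)(x)$$ for all $x\in\mathbb{R}^N$ with $\langle x,\alpha_j\rangle\neq0$ for $j=1,\dots,n$.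
   Context: $\langle\cdot,\cdot\rangle$ is the Euclidean inner product, $|x|=\sqrt{\langle x,x\rangle}$, $\partial_\xi$ is the directional derivative. A root system is a finite set $R\subset\mathbb{R}^N\setminus\{0\}$ with $s_\alpha(R)=R$ and $R\cap\mathbb{R}\alpha=\{\pm\alpha\}$ for all $\alpha\in R$, where $s_\alpha(x)=x-2\frac{\langle x,\alpha\rangle}{|\alpha|^2}\alpha$. A subsystem of $R$ is a subset closed under negation and under sums that lie in $R$; it is orthogonal if its roots are pairwise orthogonal (apart from $\pm$ pairs); a positive orthogonal subsystem $R'$ is a subset of an orthogonal subsystem $R''$ with $R''=R'\cup(-R')$, $R'\cap(-R')=\emptyset$. In particular $\alpha_1,\dots,\alpha_n$ are pairwise orthogonal. *)

theory Defs
  imports "HOL-Analysis.Analysis"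
begin

definition reflection :: "'a::real_inner \<Rightarrow> 'a \<Rightarrow> 'a" where
  "reflection \<alpha> x = x - (2 * inner x \<alpha> / (norm \<alpha>)\<^sup>2) *\<^sub>R \<alpha>"

definition root_system :: "'a::real_inner set \<Rightarrow> bool" where
  "root_system R \<longleftrightarrow> finite R \<and> 0 \<notin> R \<and>
     (\<forall>\<alpha>\<in>R. reflection \<alpha> ` R = R) \<and>
     (\<forall>\<alpha>\<in>R. \<forall>c::real. c *\<^sub>R \<alpha> \<in> R \<longleftrightarrow> (c = 1 \<or> c = -1))"

definition subsystem :: "'a::real_inner set \<Rightarrow> 'a set \<Rightarrow> bool" where
  "subsystem S R \<longleftrightarrow> S \<subseteq> R \<and> (\<forall>\<alpha>\<in>S. - \<alpha> \<in> S) \<and>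
     (\<forall>\<alpha>\<in>S. \<forall>\<beta>\<in>S. \<alpha> + \<beta> \<in> R \<longrightarrow> \<alpha> + \<beta> \<in> S)"

definition orthogonal_subsystem :: "'a::real_inner set \<Rightarrow> 'a set \<Rightarrow> bool" where
  "orthogonal_subsystem S R \<longleftrightarrow> subsystem S R \<and>
     (\<forall>\<alpha>\<in>S. \<forall>\<beta>\<in>S. \<beta> \<noteq> \<alpha> \<and> \<beta> \<noteq> - \<alpha> \<longrightarrow> inner \<alpha> \<beta> = 0)"

definition positive_orthogonal_subsystem :: "'a::real_inner set \<Rightarrow> 'a set \<Rightarrow> bool" where
  "positive_orthogonal_subsystem S R \<longleftrightarrow>
     (\<exists>S''. orthogonal_subsystem S'' R \<and> S'' = S \<union> uminus ` S \<and> S \<inter> uminus ` S = {})"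

definition has_dir_deriv :: "('a::real_normed_vector \<Rightarrow> complex) \<Rightarrow> 'a \<Rightarrow> 'a \<Rightarrow> complex \<Rightarrow> bool" where
  "has_dir_deriv g \<xi> x D \<longleftrightarrow> ((\<lambda>s::real. g (x + s *\<^sub>R \<xi>)) has_vector_derivative D) (at 0)"

definition dir_deriv :: "('a::real_normed_vector \<Rightarrow> complex) \<Rightarrow> 'a \<Rightarrow> 'a \<Rightarrow> complex" where
  "dir_deriv g \<xi> x = vector_derivative (\<lambda>s::real. g (x + s *\<^sub>R \<xi>)) (at 0)"

fun C_k :: "nat \<Rightarrow> ('a::real_normed_vector \<Rightarrow> complex) \<Rightarrow> bool" where
  "C_k 0 f = continuous_on UNIV f"
| "C_k (Suc k) f = (f differentiable_on UNIV \<and> (\<forall>v. C_k k (\<lambda>x. frechet_derivative f (at x) v)))"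

definition smooth :: "('a::real_normed_vector \<Rightarrow> complex) \<Rightarrow> bool" where
  "smooth f \<longleftrightarrow> (\<forall>k. C_k k f)"

definition tau :: "'a::real_inner \<Rightarrow> 'a \<Rightarrow> 'a" where
  "tau \<alpha> x = x - (inner x \<alpha> / (norm \<alpha>)\<^sup>2) *\<^sub>R \<alpha>"

definition Dunkl_T :: "('n::finite \<Rightarrow> complex) \<Rightarrow> ('n \<Rightarrow> 'a::real_inner) \<Rightarrow> 'a
    \<Rightarrow> ('a \<Rightarrow> complex) \<Rightarrow> 'a \<Rightarrow> complex \<Rightarrow> complex" where
  "Dunkl_T \<kappa> \<alpha> \<xi> g x D = D + (\<Sum>j\<in>UNIV. \<kappa> j * of_real (inner (\<alpha> j) \<xi>) *
       (g x - g (tau (\<alpha> j) x)) / of_real (inner x (\<alpha> j)))"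

definition hmap :: "('n::finite \<Rightarrow> 'a::real_inner) \<Rightarrow> real^'n \<Rightarrow> 'a \<Rightarrow> 'a" where
  "hmap \<alpha> t x = x + (\<Sum>j\<in>UNIV. ((t $ j - 1) * inner x (\<alpha> j) / (norm (\<alpha> j))\<^sup>2) *\<^sub>R \<alpha> j)"

definition weight :: "('n::finite \<Rightarrow> complex) \<Rightarrow> real^'n \<Rightarrow> complex" where
  "weight \<kappa> t = (\<Prod>j\<in>UNIV. (of_real (1 - t $ j)) powr (\<kappa> j - 1))"

definition chi :: "('n::finite \<Rightarrow> complex) \<Rightarrow> ('n \<Rightarrow> 'a::real_inner)
    \<Rightarrow> ('a \<Rightarrow> complex) \<Rightarrow> 'a \<Rightarrow> complex" where
  "chi \<kappa> \<alpha> f x = (1 / (\<Prod>j\<in>UNIV. Gamma (\<kappa> j))) *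
     integral (cbox (0::real^'n) 1) (\<lambda>t. f (hmap \<alpha> t x) * weight \<kappa> t)"

end

theory Submission
  imports Defs
begin



definition om :: "complex \<Rightarrow> real \<Rightarrow> complex" where
  "om k r = (if r < 1 then exp ((k - 1) * of_real (ln (1 - r))) else 0)"

definition W :: "('n::finite \<Rightarrow> complex) \<Rightarrow> real^'n \<Rightarrow> complex" where
  "W \<kappa> t = (\<Prod>j\<in>UNIV. om (\<kappa> j) (t $ j))"

lemma om_powr: "r \<le> 1 \<Longrightarrow> (of_real (1 - r) :: complex) powr (k - 1) = om k r"
proof (cases "r = 1")
  case False
  assume "r \<le> 1"
  with False have "r < 1" by simp
  then have "Ln (of_real (1 - r)) = of_real (ln (1 - r))" using Ln_of_real[of "1 - r"] by simp
  with \<open>r < 1\<close> show ?thesis by (simp add: powr_def om_def)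
qed (simp add: om_def)

lemma weight_W: "t \<in> cbox 0 1 \<Longrightarrow> weight \<kappa> t = W \<kappa> t"
  unfolding weight_def W_def
  by (intro prod.cong refl om_powr) (auto simp: mem_box_cart)

lemma norm_om: "0 \<le> r \<Longrightarrow> r \<le> 1 \<Longrightarrow> norm (om k r) = (1 - r) powr (Re k - 1)"
  by (auto simp: om_def powr_def)

lemma om_meas[measurable]: "om k \<in> borel_measurable borel"
  unfolding om_def by measurable

lemma W_meas[measurable]: "W \<kappa> \<in> borel_measurable borel"
  unfolding W_def by measurable

lemma powr_int01:
  fixes a :: real assumes a: "a > 0"
  shows "((\<lambda>r. (1 - r) powr (a - 1)) has_integral 1 / a) {0..1}"
proof -
  define F where "F r = - ((1 - r) powr a / a)" for r
  have "((\<lambda>r. (1 - r) powr (a - 1)) has_integral F 1 - F 0) {0..1}"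
  proof (rule fundamental_theorem_of_calculus_interior)
    show "continuous_on {0..1} F" unfolding F_def
      using a by (intro continuous_intros continuous_on_powr') auto
    fix x :: real assume x: "x \<in> {0<..<1}"
    have "((\<lambda>r. (1 - r) powr a) has_real_derivative a * (1 - x) powr (a - 1) * (-1)) (at x)"
      using x by (intro DERIV_fun_powr[of "\<lambda>r. 1 - r", simplified] derivative_eq_intros) auto
    then have "(F has_real_derivative (1 - x) powr (a - 1)) (at x)"
      unfolding F_def using a x by (auto intro!: derivative_eq_intros)
    then show "(F has_vector_derivative (1 - x) powr (a - 1)) (at x)"
      by (simp add: has_real_derivative_iff_has_vector_derivative)
  qed simp
  then show ?thesis using a by (simp add: F_def)
qed

lemma Basis_cart: "(Basis :: (real^'n) set) = range (\<lambda>j. axis j 1)"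
  unfolding Basis_vec_def Basis_real_def by auto

lemma inj_axis1: "inj (\<lambda>j::'n::finite. axis j (1::real))"
  by (auto simp: inj_def axis_eq_axis)

lemma prod_Basis_cart:
  fixes H :: "'n::finite \<Rightarrow> real \<Rightarrow> 'b::comm_monoid_mult"
  shows "(\<Prod>b\<in>(Basis::(real^'n) set). H (SOME j. b = axis j 1) (t \<bullet> b)) = (\<Prod>j\<in>UNIV. H j (t $ j))"
proof -
  have "(\<Prod>b\<in>(Basis::(real^'n) set). H (SOME j. b = axis j 1) (t \<bullet> b))
      = (\<Prod>j\<in>UNIV. H (SOME j'. axis j (1::real) = axis j' 1) (t \<bullet> axis j 1))"
    unfolding Basis_cart by (subst prod.reindex[OF inj_axis1]) (simp add: comp_def)
  also have "\<dots> = (\<Prod>j\<in>UNIV. H j (t $ j))"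
    by (intro prod.cong refl) (simp add: inner_axis axis_eq_axis)
  finally show ?thesis .
qed

lemma W_int:
  fixes \<kappa> :: "'n::finite \<Rightarrow> complex"
  assumes pos: "\<forall>j. Re (\<kappa> j) > 0"
  shows "integrable lborel (\<lambda>t::real^'n. indicator (cbox 0 1) t *\<^sub>R W \<kappa> t)"
proof (rule integrableI_bounded)
  show "(\<lambda>t::real^'n. indicator (cbox 0 1) t *\<^sub>R W \<kappa> t) \<in> borel_measurable lborel"
    by measurable
  define H where "H j r = indicator {0..1::real} r * (1 - r) powr (Re (\<kappa> j) - 1)" for j r
  have eqn: "norm (indicator (cbox 0 1) t *\<^sub>R W \<kappa> t) = (\<Prod>j\<in>UNIV. H j (t $ j))" for t :: "real^'n"
  proof (cases "t \<in> cbox 0 1")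
    case True
    then have "\<And>j. t $ j \<in> {0..1}" by (auto simp: mem_box_cart)
    then show ?thesis using True
      by (auto simp: W_def H_def prod_norm[symmetric] norm_om intro!: prod.cong)
  next
    case False
    then obtain j where "t $ j \<notin> {0..1}" by (auto simp: mem_box_cart)
    then have "H j (t $ j) = 0" by (simp add: H_def)
    then have "(\<Prod>j\<in>UNIV. H j (t $ j)) = 0" by (meson UNIV_I finite prod_zero)
    with False show ?thesis by simp
  qed
  have "(\<integral>\<^sup>+ t. ennreal (norm (indicator (cbox 0 1) t *\<^sub>R W \<kappa> t)) \<partial>lborel)
      = (\<integral>\<^sup>+ t. ennreal (\<Prod>b\<in>(Basis::(real^'n) set). H (SOME j. b = axis j 1) (t \<bullet> b)) \<partial>lborel)"
    by (simp only: eqn prod_Basis_cart)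
  also have "\<dots> = (\<integral>\<^sup>+ t. (\<Prod>b\<in>(Basis::(real^'n) set). ennreal (H (SOME j. b = axis j 1) (t \<bullet> b))) \<partial>lborel)"
    by (intro nn_integral_cong prod_ennreal[symmetric]) (auto simp: H_def)
  also have "\<dots> = (\<Prod>b\<in>(Basis::(real^'n) set). \<integral>\<^sup>+ r. ennreal (H (SOME j. b = axis j 1) r) \<partial>lborel)"
    by (rule nn_integral_lborel_prod) (auto simp: H_def)
  also have "\<dots> = (\<Prod>b\<in>(Basis::(real^'n) set). ennreal (1 / Re (\<kappa> (SOME j. b = axis j 1))))"
  proof (intro prod.cong refl)
    fix b :: "real^'n"
    let ?a = "Re (\<kappa> (SOME j. b = axis j 1))"
    have "?a > 0" using pos by simp
    then show "(\<integral>\<^sup>+ r. ennreal (H (SOME j. b = axis j 1) r) \<partial>lborel) = ennreal (1 / ?a)"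
      unfolding H_def
      by (intro nn_integral_has_integral_lebesgue powr_int01) auto
  qed
  also have "\<dots> < \<infinity>"
    by (simp add: less_top[symmetric] ennreal_prod_eq_top)
  finally show "(\<integral>\<^sup>+ t. ennreal (norm (indicator (cbox 0 1) t *\<^sub>R W \<kappa> t)) \<partial>lborel) < \<infinity>" .
qed

lemma gW_int:
  fixes \<kappa> :: "'n::finite \<Rightarrow> complex" and g :: "real^'n \<Rightarrow> complex"
  assumes pos: "\<forall>j. Re (\<kappa> j) > 0" and g: "continuous_on UNIV g"
  shows "integrable lborel (\<lambda>t. indicator (cbox 0 1) t *\<^sub>R (g t * W \<kappa> t))"
proof -
  have "compact (g ` cbox 0 1)"
    by (intro compact_continuous_image continuous_on_subset[OF g]) auto
  then obtain B where B: "B > 0" "\<And>t. t \<in> cbox 0 1 \<Longrightarrow> norm (g t) \<le> B"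
    by (metis compact_imp_bounded bounded_pos image_eqI)
  show ?thesis
  proof (rule Bochner_Integration.integrable_bound)
    show "integrable lborel (\<lambda>t. B *\<^sub>R (indicator (cbox 0 1) t *\<^sub>R W \<kappa> t))"
      using W_int[OF pos] by (rule integrable_scaleR_right)
    show "(\<lambda>t. indicator (cbox 0 1) t *\<^sub>R (g t * W \<kappa> t)) \<in> borel_measurable lborel"
      using borel_measurable_continuous_onI[OF g] by measurable
    show "AE t in lborel. norm (indicator (cbox 0 1) t *\<^sub>R (g t * W \<kappa> t))
           \<le> norm (B *\<^sub>R (indicator (cbox 0 1) t *\<^sub>R W \<kappa> t))"
    proof (rule AE_I2)
      fix t :: "real^'n"
      show "norm (indicator (cbox 0 1) t *\<^sub>R (g t * W \<kappa> t))
           \<le> norm (B *\<^sub>R (indicator (cbox 0 1) t *\<^sub>R W \<kappa> t))"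
        using B by (cases "t \<in> cbox 0 1") (auto simp: norm_mult intro!: mult_right_mono)
    qed
  qed
qed

definition II :: "('n::finite \<Rightarrow> complex) \<Rightarrow> (real^'n \<Rightarrow> complex) \<Rightarrow> complex" where
  "II \<kappa> g = (LINT t|lborel. indicator (cbox 0 1) t *\<^sub>R (g t * W \<kappa> t))"

lemma II_integral:
  fixes \<kappa> :: "'n::finite \<Rightarrow> complex" and g :: "real^'n \<Rightarrow> complex"
  assumes pos: "\<forall>j. Re (\<kappa> j) > 0" and g: "continuous_on UNIV g"
  shows "integral (cbox 0 1) (\<lambda>t. g t * weight \<kappa> t) = II \<kappa> g"
proof -
  have "integral (cbox 0 1) (\<lambda>t. g t * weight \<kappa> t) = integral (cbox 0 1) (\<lambda>t. g t * W \<kappa> t)"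
    by (intro integral_cong) (simp add: weight_W)
  also have "\<dots> = II \<kappa> g"
    using set_borel_integral_eq_integral(2)[of "cbox 0 1" "\<lambda>t. g t * W \<kappa> t"] gW_int[OF pos g]
    by (simp add: set_integrable_def set_lebesgue_integral_def II_def)
  finally show ?thesis .
qed

lemma II_cmult: "II \<kappa> (\<lambda>t. c * g t) = c * II \<kappa> g"
proof -
  have "II \<kappa> (\<lambda>t. c * g t) = (LINT t|lborel. c * (indicator (cbox 0 1) t *\<^sub>R (g t * W \<kappa> t)))"
    unfolding II_def by (intro Bochner_Integration.integral_cong) (auto simp: scaleR_conv_of_real)
  also have "\<dots> = c * II \<kappa> g" unfolding II_def by (rule integral_mult_right_zero)
  finally show ?thesis .
qed

lemma II_add:
  assumes pos: "\<forall>j. Re (\<kappa> j) > 0" and "continuous_on UNIV g1" "continuous_on UNIV g2"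
  shows "II \<kappa> (\<lambda>t. g1 t + g2 t) = II \<kappa> g1 + II \<kappa> g2"
proof -
  have "II \<kappa> (\<lambda>t. g1 t + g2 t) = (LINT t|lborel. indicator (cbox 0 1) t *\<^sub>R (g1 t * W \<kappa> t)
       + indicator (cbox 0 1) t *\<^sub>R (g2 t * W \<kappa> t))"
    unfolding II_def by (intro Bochner_Integration.integral_cong) (auto simp: algebra_simps)
  then show ?thesis using gW_int[OF pos assms(2)] gW_int[OF pos assms(3)] by (simp add: II_def)
qed

lemma II_diff:
  assumes pos: "\<forall>j. Re (\<kappa> j) > 0" and "continuous_on UNIV g1" "continuous_on UNIV g2"
  shows "II \<kappa> (\<lambda>t. g1 t - g2 t) = II \<kappa> g1 - II \<kappa> g2"
proof -
  have "II \<kappa> (\<lambda>t. g1 t - g2 t) = (LINT t|lborel. indicator (cbox 0 1) t *\<^sub>R (g1 t * W \<kappa> t)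
       - indicator (cbox 0 1) t *\<^sub>R (g2 t * W \<kappa> t))"
    unfolding II_def by (intro Bochner_Integration.integral_cong) (auto simp: algebra_simps)
  then show ?thesis using gW_int[OF pos assms(2)] gW_int[OF pos assms(3)] by (simp add: II_def)
qed

lemma II_sum:
  assumes pos: "\<forall>j. Re (\<kappa> j) > 0" and fin: "finite S" and c: "\<And>i. i \<in> S \<Longrightarrow> continuous_on UNIV (g i)"
  shows "II \<kappa> (\<lambda>t. \<Sum>i\<in>S. g i t) = (\<Sum>i\<in>S. II \<kappa> (g i))"
  using fin c
proof (induction S rule: finite_induct)
  case empty
  then show ?case by (simp add: II_def)
next
  case (insert x F)
  have "II \<kappa> (\<lambda>t. \<Sum>i\<in>insert x F. g i t) = II \<kappa> (\<lambda>t. g x t + (\<Sum>i\<in>F. g i t))"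
    using insert by simp
  also have "\<dots> = II \<kappa> (g x) + II \<kappa> (\<lambda>t. \<Sum>i\<in>F. g i t)"
    using insert by (intro II_add pos continuous_on_sum) auto
  finally show ?case using insert by simp
qed

lemma Df_expand:
  fixes f :: "'a::euclidean_space \<Rightarrow> complex"
  assumes "f differentiable (at y)"
  shows "frechet_derivative f (at y) w = (\<Sum>b\<in>Basis. (w \<bullet> b) *\<^sub>R frechet_derivative f (at y) b)"
proof -
  have lin: "linear (frechet_derivative f (at y))"
    using assms frechet_derivative_works has_derivative_linear by blast
  have "frechet_derivative f (at y) w = frechet_derivative f (at y) (\<Sum>b\<in>Basis. (w \<bullet> b) *\<^sub>R b)"
    by (simp add: euclidean_representation)
  also have "\<dots> = (\<Sum>b\<in>Basis. (w \<bullet> b) *\<^sub>R frechet_derivative f (at y) b)"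
    by (simp add: linear_sum[OF lin] linear_scale[OF lin])
  finally show ?thesis .
qed

lemma Df_cont:
  fixes f :: "'a::euclidean_space \<Rightarrow> complex"
  assumes df: "\<And>y. f differentiable (at y)"
    and cd: "\<And>w. continuous_on UNIV (\<lambda>y. frechet_derivative f (at y) w)"
    and ca: "continuous_on S a" and cb: "continuous_on S b"
  shows "continuous_on S (\<lambda>z. frechet_derivative f (at (a z)) (b z))"
proof -
  have eq: "(\<lambda>z. frechet_derivative f (at (a z)) (b z))
     = (\<lambda>z. \<Sum>bb\<in>Basis. (b z \<bullet> bb) *\<^sub>R frechet_derivative f (at (a z)) bb)"
    by (rule ext) (rule Df_expand[OF df])
  have "continuous_on S (\<lambda>z. frechet_derivative f (at (a z)) bb)" for bb
    using continuous_on_compose2[OF cd[of bb] ca] by simp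
  then show ?thesis unfolding eq
    by (intro continuous_intros cb)
qed




lemma unif_est:
  fixes f :: "'a::euclidean_space \<Rightarrow> complex" and p v :: "real^'n::finite \<Rightarrow> 'a"
  assumes df: "\<And>y. f differentiable (at y)"
    and cd: "\<And>w. continuous_on UNIV (\<lambda>y. frechet_derivative f (at y) w)"
    and cp: "continuous_on UNIV p" and cv: "continuous_on UNIV v" and e: "e > 0"
  shows "\<exists>d>0. \<forall>h t. \<bar>h\<bar> < d \<longrightarrow> t \<in> cbox 0 1 \<longrightarrow>
     norm (f (p t + h *\<^sub>R v t) - f (p t) - h *\<^sub>R frechet_derivative f (at (p t)) (v t)) \<le> e * \<bar>h\<bar>"
proof -
  define G where "G z = frechet_derivative f (at (p (fst z) + snd z *\<^sub>R v (fst z))) (v (fst z))"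
    for z :: "(real^'n) \<times> real"
  have cpf: "continuous_on UNIV (\<lambda>z::(real^'n) \<times> real. p (fst z))"
    by (rule continuous_on_compose2[OF cp continuous_on_fst[OF continuous_on_id]]) auto
  have cvf: "continuous_on UNIV (\<lambda>z::(real^'n) \<times> real. v (fst z))"
    by (rule continuous_on_compose2[OF cv continuous_on_fst[OF continuous_on_id]]) auto
  have cG: "continuous_on UNIV G"
    unfolding G_def
    by (rule Df_cont[OF df cd]) (intro continuous_intros cpf cvf)+
  define K where "K = cbox (0::real^'n) 1 \<times> {-1..1::real}"
  have "compact K" unfolding K_def by (intro compact_Times) auto
  then have "uniformly_continuous_on K G"
    by (intro compact_uniformly_continuous continuous_on_subset[OF cG]) auto
  then obtain d0 where d0: "d0 > 0" "\<And>z z'. z \<in> K \<Longrightarrow> z' \<in> K \<Longrightarrow> dist z' z < d0 \<Longrightarrow> dist (G z') (G z) < e"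
    unfolding uniformly_continuous_on_def using e by metis
  show ?thesis
  proof (intro exI[of _ "min d0 1"] conjI allI impI)
    show "min d0 1 > 0" using d0 by simp
    fix h :: real and t :: "real^'n"
    assume h: "\<bar>h\<bar> < min d0 1" and t: "t \<in> cbox 0 1"
    define \<phi> where "\<phi> r = f (p t + r *\<^sub>R v t)" for r
    define S where "S = {-\<bar>h\<bar>..\<bar>h\<bar>}"
    have "norm (\<phi> h - \<phi> 0 - (h - 0) *\<^sub>R G (t, 0)) \<le> norm (h - 0) * e"
    proof (rule differentiable_bound_linearization[where f' = "\<lambda>r i. i *\<^sub>R G (t, r)" and S = S])
      show "0 + s *\<^sub>R (h - 0) \<in> S" if "s \<in> {0..1}" for s
      proof -
        have "\<bar>s * h\<bar> \<le> \<bar>h\<bar>" using that by (simp add: abs_mult mult_left_le_one_le)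
        then show ?thesis by (simp add: S_def abs_le_iff)
      qed
      show "0 \<in> S" by (simp add: S_def)
      fix r assume r: "r \<in> S"
      have "((\<lambda>r. p t + r *\<^sub>R v t) has_derivative (\<lambda>i. i *\<^sub>R v t)) (at r within S)"
        by (auto intro!: derivative_eq_intros)
      from has_derivative_compose[OF this, of f] df[of "p t + r *\<^sub>R v t"]
      have "(\<phi> has_derivative (\<lambda>i. frechet_derivative f (at (p t + r *\<^sub>R v t)) (i *\<^sub>R v t))) (at r within S)"
        unfolding \<phi>_def frechet_derivative_works by simp
      moreover have "frechet_derivative f (at (p t + r *\<^sub>R v t)) (i *\<^sub>R v t) = i *\<^sub>R G (t, r)" for i
      proof -
        have "linear (frechet_derivative f (at (p t + r *\<^sub>R v t)))"
          using df frechet_derivative_works has_derivative_linear by blast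
        then show ?thesis by (simp add: G_def linear_scale)
      qed
      ultimately show "(\<phi> has_derivative (\<lambda>i. i *\<^sub>R G (t, r))) (at r within S)" by simp
      have "(\<lambda>i. i *\<^sub>R G (t, r)) - (\<lambda>i. i *\<^sub>R G (t, 0)) = (\<lambda>i. i *\<^sub>R (G (t, r) - G (t, 0)))"
        by (auto simp: fun_eq_iff algebra_simps)
      then have "onorm ((\<lambda>i. i *\<^sub>R G (t, r)) - (\<lambda>i. i *\<^sub>R G (t, 0))) = norm (G (t, r) - G (t, 0))"
        using onorm_scaleR_left[of "\<lambda>i::real. i" "G (t, r) - G (t, 0)"] by (simp add: onorm_id)
      also have "\<dots> \<le> e"
      proof -
        have "\<bar>r\<bar> \<le> \<bar>h\<bar>" using r by (auto simp: S_def)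
        then have r1: "\<bar>r\<bar> < d0" "\<bar>r\<bar> \<le> 1" using h by linarith+
        have "(t, r) \<in> K" using t r1(2) by (simp add: K_def abs_le_iff)
        moreover have "(t, 0) \<in> K" using t by (simp add: K_def)
        moreover have "dist (t, r) (t, 0) < d0" using r1(1) by (simp add: dist_Pair_Pair dist_real_def)
        ultimately have "(t, r) \<in> K" "(t, 0) \<in> K" "dist (t, r) (t, 0) < d0" by auto
        from d0(2)[OF this(2,1,3)] show ?thesis by (simp add: dist_norm)
      qed
      finally show "onorm ((\<lambda>i. i *\<^sub>R G (t, r)) - (\<lambda>i. i *\<^sub>R G (t, 0))) \<le> e" .
    qed
    then show "norm (f (p t + h *\<^sub>R v t) - f (p t) - h *\<^sub>R frechet_derivative f (at (p t)) (v t)) \<le> e * \<bar>h\<bar>"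
      by (simp add: \<phi>_def G_def mult.commute)
  qed
qed




lemma II_bound:
  fixes \<kappa> :: "'n::finite \<Rightarrow> complex" and g :: "real^'n \<Rightarrow> complex"
  assumes pos: "\<forall>j. Re (\<kappa> j) > 0" and g: "continuous_on UNIV g"
    and B: "\<And>t. t \<in> cbox 0 1 \<Longrightarrow> norm (g t) \<le> B"
  shows "norm (II \<kappa> g) \<le> B * (LINT t|lborel. norm (indicator (cbox 0 1) t *\<^sub>R W \<kappa> t))"
proof -
  have "norm (II \<kappa> g) \<le> (LINT t|lborel. norm (indicator (cbox 0 1) t *\<^sub>R (g t * W \<kappa> t)))"
    unfolding II_def by (rule integral_norm_bound)
  also have "\<dots> \<le> (LINT t|lborel. B * norm (indicator (cbox 0 1) t *\<^sub>R W \<kappa> t))"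
  proof (rule integral_mono)
    show "integrable lborel (\<lambda>t. norm (indicator (cbox 0 1) t *\<^sub>R (g t * W \<kappa> t)))"
      using gW_int[OF pos g] by (rule integrable_norm)
    show "integrable lborel (\<lambda>t. B * norm (indicator (cbox 0 1) t *\<^sub>R W \<kappa> t))"
      using W_int[OF pos] by (intro integrable_mult_right integrable_norm)
    fix t :: "real^'n"
    show "norm (indicator (cbox 0 1) t *\<^sub>R (g t * W \<kappa> t)) \<le> B * norm (indicator (cbox 0 1) t *\<^sub>R W \<kappa> t)"
      using B[of t] by (cases "t \<in> cbox 0 1") (auto simp: norm_mult intro!: mult_right_mono)
  qed
  also have "\<dots> = B * (LINT t|lborel. norm (indicator (cbox 0 1) t *\<^sub>R W \<kappa> t))"
    by simp
  finally show ?thesis .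
qed

lemma II_deriv:
  fixes f :: "'a::euclidean_space \<Rightarrow> complex" and p v :: "real^'n::finite \<Rightarrow> 'a"
    and \<kappa> :: "'n \<Rightarrow> complex"
  assumes pos: "\<forall>j. Re (\<kappa> j) > 0"
    and df: "\<And>y. f differentiable (at y)"
    and cd: "\<And>w. continuous_on UNIV (\<lambda>y. frechet_derivative f (at y) w)"
    and cp: "continuous_on UNIV p" and cv: "continuous_on UNIV v"
  shows "((\<lambda>s. II \<kappa> (\<lambda>t. f (p t + s *\<^sub>R v t))) has_vector_derivative
            II \<kappa> (\<lambda>t. frechet_derivative f (at (p t)) (v t))) (at 0)"
proof -
  define Df where "Df t = frechet_derivative f (at (p t)) (v t)" for t
  define Q where "Q s = II \<kappa> (\<lambda>t. f (p t + s *\<^sub>R v t))" for s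
  define D where "D = II \<kappa> Df"
  define Cw where "Cw = (LINT t|lborel. norm (indicator (cbox 0 1) t *\<^sub>R W \<kappa> t))"
  have Cw: "Cw \<ge> 0" unfolding Cw_def by simp
  have cf: "continuous_on UNIV f"
    using df by (simp add: differentiable_imp_continuous_on differentiable_on_def)
  have cfs: "continuous_on UNIV (\<lambda>t. f (p t + s *\<^sub>R v t))" for s
    by (rule continuous_on_compose2[OF cf]) (auto intro!: continuous_intros cp cv)
  have cD: "continuous_on UNIV Df"
    unfolding Df_def by (rule Df_cont[OF df cd cp cv])
  have key: "Q h - Q 0 - h *\<^sub>R D = II \<kappa> (\<lambda>t. f (p t + h *\<^sub>R v t) - f (p t) - of_real h * Df t)" for h
  proof -
    have "II \<kappa> (\<lambda>t. f (p t + h *\<^sub>R v t) - f (p t) - of_real h * Df t)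
        = II \<kappa> (\<lambda>t. f (p t + h *\<^sub>R v t) - f (p t)) - II \<kappa> (\<lambda>t. of_real h * Df t)"
      by (intro II_diff pos continuous_intros cfs cD continuous_on_compose2[OF cf cp]) auto
    also have "\<dots> = Q h - Q 0 - h *\<^sub>R D"
      using II_diff[OF pos cfs[of h] continuous_on_compose2[OF cf cp]]
      by (simp add: Q_def D_def II_cmult scaleR_conv_of_real)
    finally show ?thesis by simp
  qed
  show ?thesis
    unfolding has_vector_derivative_def has_derivative_at
  proof (intro conjI bounded_linear_scaleR_left metric_LIM_I)
    fix r :: real assume r: "r > 0"
    define e where "e = r / (2 * (Cw + 1))"
    have e: "e > 0" using r Cw by (simp add: e_def)
    obtain d where d: "d > 0" and dd: "\<And>h t. \<bar>h\<bar> < d \<Longrightarrow> t \<in> cbox 0 1 \<Longrightarrow>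
        norm (f (p t + h *\<^sub>R v t) - f (p t) - h *\<^sub>R Df t) \<le> e * \<bar>h\<bar>"
      using unif_est[OF df cd cp cv e] unfolding Df_def by blast
    show "\<exists>s>0. \<forall>x. x \<noteq> 0 \<and> dist x 0 < s \<longrightarrow>
        dist (norm ((\<lambda>s. II \<kappa> (\<lambda>t. f (p t + s *\<^sub>R v t))) (0 + x) - (\<lambda>s. II \<kappa> (\<lambda>t. f (p t + s *\<^sub>R v t))) 0
           - x *\<^sub>R II \<kappa> (\<lambda>t. frechet_derivative f (at (p t)) (v t))) / norm x) 0 < r"
    proof (intro exI[of _ d] conjI allI impI d)
      fix x :: real assume x: "x \<noteq> 0 \<and> dist x 0 < d"
      have hx: "\<bar>x\<bar> < d" using x by simp
      have "norm (Q x - Q 0 - x *\<^sub>R D) \<le> (e * \<bar>x\<bar>) * Cw"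
        unfolding key Cw_def
        using dd[OF hx] by (intro II_bound pos) (auto intro!: continuous_intros cfs cD continuous_on_compose2[OF cf cp] simp: scaleR_conv_of_real)
      also have "\<dots> < r * \<bar>x\<bar>"
      proof -
        have "Cw / (2 * (Cw + 1)) < 1" using Cw by simp
        then have "r * (Cw / (2 * (Cw + 1))) < r * 1" using r by (intro mult_strict_left_mono) auto
        then have "e * Cw < r" by (simp add: e_def)
        then show ?thesis using x by (simp add: mult.commute mult.left_commute)
      qed
      finally have "norm (Q x - Q 0 - x *\<^sub>R D) / \<bar>x\<bar> < r"
        using x by (simp add: divide_less_eq)
      then show "dist (norm ((\<lambda>s. II \<kappa> (\<lambda>t. f (p t + s *\<^sub>R v t))) (0 + x) - (\<lambda>s. II \<kappa> (\<lambda>t. f (p t + s *\<^sub>R v t))) 0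
           - x *\<^sub>R II \<kappa> (\<lambda>t. frechet_derivative f (at (p t)) (v t))) / norm x) 0 < r"
        by (simp add: Q_def D_def Df_def[abs_def])
    qed
  qed
qed




lemma powr_k_om:
  assumes "y < 1"
  shows "(of_real (1 - y) :: complex) powr k = of_real (1 - y) * om k y"
proof -
  have l: "Ln (of_real (1 - y)) = of_real (ln (1 - y))" using Ln_of_real[of "1 - y"] assms by simp
  have e: "(of_real (1 - y) :: complex) = exp (of_real (ln (1 - y)))"
    using assms by (simp add: exp_of_real)
  have "(of_real (1 - y) :: complex) powr k = exp (k * of_real (ln (1 - y)))"
    using assms l by (simp add: powr_def)
  also have "\<dots> = exp (of_real (ln (1 - y))) * exp ((k - 1) * of_real (ln (1 - y)))"
    by (simp add: exp_add[symmetric] algebra_simps)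
  also have "\<dots> = of_real (1 - y) * om k y"
    using assms by (simp add: om_def e[symmetric])
  finally show ?thesis .
qed

lemma ibp1:
  fixes f :: "'a::euclidean_space \<Rightarrow> complex" and A e :: 'a and k :: complex
  assumes df: "\<And>y. f differentiable (at y)" and k: "Re k > 0"
  shows "(LINT y|lborel. indicator {0..1} y *\<^sub>R
     (((1 - of_real y) * frechet_derivative f (at (A + y *\<^sub>R e)) e - k * (f (A + y *\<^sub>R e) - f A)) * om k y)) = 0"
proof -
  define g where "g y = ((1 - of_real y) * frechet_derivative f (at (A + y *\<^sub>R e)) e - k * (f (A + y *\<^sub>R e) - f A)) * om k y" for y :: real
  define \<Psi> where "\<Psi> y = (of_real (1 - y) :: complex) powr k * (f (A + y *\<^sub>R e) - f A)" for y :: real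
  have cf: "continuous_on UNIV f"
    using df by (simp add: differentiable_imp_continuous_on differentiable_on_def)
  have "(g has_integral \<Psi> 1 - \<Psi> 0) {0..1}"
  proof (rule fundamental_theorem_of_calculus_interior)
    show "continuous_on {0..1} \<Psi>" unfolding \<Psi>_def
      using k by (intro continuous_intros continuous_on_powr_complex continuous_on_compose2[OF cf]) auto
    fix y :: real assume y: "y \<in> {0<..<1}"
    have d1: "((\<lambda>y. (of_real (1 - y) :: complex) powr k) has_vector_derivative
          (-1) * (k * of_real (1 - y) powr (k - 1))) (at y)"
    proof -
      have a: "((\<lambda>y. (of_real (1 - y) :: complex)) has_vector_derivative -1) (at y)"
        by (auto intro!: derivative_eq_intros)
      have b: "((\<lambda>z. z powr k) has_field_derivative (k * of_real (1 - y) powr (k - 1))) (at (of_real (1 - y)))"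
        using y by (intro has_field_derivative_powr) (auto simp: complex_nonpos_Reals_iff)
      from field_vector_diff_chain_at[OF a b] show ?thesis by (simp add: comp_def)
    qed
    have d2: "((\<lambda>y. f (A + y *\<^sub>R e) - f A) has_vector_derivative frechet_derivative f (at (A + y *\<^sub>R e)) e) (at y)"
    proof -
      have "((\<lambda>y. A + y *\<^sub>R e) has_derivative (\<lambda>i. i *\<^sub>R e)) (at y)"
        by (auto intro!: derivative_eq_intros)
      from has_derivative_compose[OF this, of f] df[of "A + y *\<^sub>R e"]
      have "((\<lambda>y. f (A + y *\<^sub>R e)) has_derivative (\<lambda>i. frechet_derivative f (at (A + y *\<^sub>R e)) (i *\<^sub>R e))) (at y)"
        unfolding frechet_derivative_works by simp
      moreover have "linear (frechet_derivative f (at (A + y *\<^sub>R e)))"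
        using df frechet_derivative_works has_derivative_linear by blast
      ultimately have "((\<lambda>y. f (A + y *\<^sub>R e)) has_derivative (\<lambda>i. i *\<^sub>R frechet_derivative f (at (A + y *\<^sub>R e)) e)) (at y)"
        by (simp add: linear_scale)
      then show ?thesis
        unfolding has_vector_derivative_def by (auto intro!: derivative_eq_intros)
    qed
    have "(\<Psi> has_vector_derivative
        (of_real (1 - y) powr k * frechet_derivative f (at (A + y *\<^sub>R e)) e
         + ((-1) * (k * of_real (1 - y) powr (k - 1))) * (f (A + y *\<^sub>R e) - f A))) (at y)"
      unfolding \<Psi>_def by (rule has_vector_derivative_mult[OF d1 d2])
    moreover have "of_real (1 - y) powr k * frechet_derivative f (at (A + y *\<^sub>R e)) e
         + ((-1) * (k * of_real (1 - y) powr (k - 1))) * (f (A + y *\<^sub>R e) - f A) = g y"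
    proof -
      have p1: "(of_real (1 - y) :: complex) powr k = of_real (1 - y) * om k y"
        using y by (intro powr_k_om) auto
      have p2: "(of_real (1 - y) :: complex) powr (k - 1) = om k y"
        using y by (intro om_powr) auto
      show ?thesis unfolding p1 p2 by (simp add: g_def algebra_simps)
    qed
    ultimately show "(\<Psi> has_vector_derivative g y) (at y)" by simp
  qed simp
  moreover have "\<Psi> 1 = 0" "\<Psi> 0 = 0" by (simp_all add: \<Psi>_def)
  ultimately have hi: "(g has_integral 0) {0..1}" by simp
  show ?thesis
  proof (cases "set_integrable lborel {0..1::real} g")
    case True
    from set_borel_integral_eq_integral(2)[OF True] hi
    show ?thesis by (simp add: set_lebesgue_integral_def g_def integral_unique)
  next
    case False
    then show ?thesis by (simp add: set_integrable_def not_integrable_integral_eq g_def)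
  qed
qed




lemma sum_Basis_cart:
  fixes c :: "real^'n::finite \<Rightarrow> real"
  shows "(\<Sum>b\<in>(Basis::(real^'n) set). c b *\<^sub>R b) = (\<chi> i. c (axis i 1))"
proof -
  have "(\<Sum>b\<in>(Basis::(real^'n) set). c b *\<^sub>R b) = (\<Sum>i\<in>UNIV. c (axis i 1) *\<^sub>R (axis i 1 :: real^'n))"
    unfolding Basis_cart by (subst sum.reindex[OF inj_axis1]) (simp add: comp_def)
  also have "\<dots> = (\<chi> i. c (axis i 1))"
    by (simp add: vec_eq_iff axis_def if_distrib cong: if_cong)
  finally show ?thesis .
qed

lemma fub:
  fixes \<kappa> :: "'n::finite \<Rightarrow> complex" and g :: "real^'n \<Rightarrow> complex" and j :: 'n
  assumes pos: "\<forall>j. Re (\<kappa> j) > 0" and g: "continuous_on UNIV g"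
    and one: "\<And>c. (LINT y|lborel. indicator {0..1} y *\<^sub>R (g (\<chi> k. if k = j then y else c k) * om (\<kappa> j) y)) = 0"
  shows "II \<kappa> g = 0"
proof -
  define K where "K t = indicator (cbox 0 1) t *\<^sub>R (g t * W \<kappa> t)" for t :: "real^'n"
  have gm[measurable]: "g \<in> borel_measurable borel" using borel_measurable_continuous_onI[OF g] .
  have Km[measurable]: "K \<in> borel_measurable borel" unfolding K_def by measurable
  have Kint: "integrable lborel K" unfolding K_def by (rule gW_int[OF pos g])
  define \<phi> where "\<phi> f = (\<Sum>b\<in>(Basis::(real^'n) set). f b *\<^sub>R b)" for f
  have \<phi>m[measurable]: "\<phi> \<in> (\<Pi>\<^sub>M b\<in>Basis. lborel) \<rightarrow>\<^sub>M borel" unfolding \<phi>_def by measurable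
  have LE: "(lborel :: (real^'n) measure) = distr (\<Pi>\<^sub>M b\<in>Basis. lborel) borel \<phi>"
    unfolding \<phi>_def by (rule lborel_eq)
  interpret P: product_sigma_finite "\<lambda>_::real^'n. lborel" by standard
  have "II \<kappa> g = integral\<^sup>L lborel K" by (simp add: II_def K_def[abs_def])
  also have "\<dots> = integral\<^sup>L (distr (\<Pi>\<^sub>M b\<in>Basis. lborel) borel \<phi>) K"
    by (rule arg_cong[where f="\<lambda>M. integral\<^sup>L M K", OF LE])
  also have "\<dots> = (LINT f|(\<Pi>\<^sub>M b\<in>Basis. lborel). K (\<phi> f))"
    by (rule integral_distr) measurable
  also have "\<dots> = 0"
  proof -
    define bj where "bj = (axis j 1 :: real^'n)"
    have bj: "bj \<in> Basis" by (simp add: bj_def Basis_cart)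
    have B: "(Basis :: (real^'n) set) = insert bj (Basis - {bj})" using bj by auto
    have int2: "integrable (\<Pi>\<^sub>M b\<in>Basis. lborel) (\<lambda>f. K (\<phi> f))"
      using Kint unfolding LE by (subst (asm) integrable_distr_eq) auto
    have inner: "(LINT y|lborel. K (\<phi> (x(bj := y)))) = 0" for x :: "real^'n \<Rightarrow> real"
    proof -
      define c where "c i = x (axis i 1)" for i
      define tt where "tt y = (\<chi> i. if i = j then y else c i)" for y
      have \<phi>x: "\<phi> (x(bj := y)) = tt y" for y
        unfolding \<phi>_def sum_Basis_cart tt_def c_def bj_def by (intro arg_cong[where f=vec_lambda] ext) (simp add: axis_eq_axis)
      define Cst where "Cst = (if \<forall>i\<in>UNIV - {j}. c i \<in> {0..1} then (\<Prod>i\<in>UNIV - {j}. om (\<kappa> i) (c i)) else 0)"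
      have Keq: "K (tt y) = Cst * (indicator {0..1} y *\<^sub>R (g (tt y) * om (\<kappa> j) y))" for y
      proof -
        have Wt: "W \<kappa> (tt y) = om (\<kappa> j) y * (\<Prod>i\<in>UNIV - {j}. om (\<kappa> i) (c i))"
          unfolding W_def by (subst prod.remove[of UNIV j]) (auto simp: tt_def intro!: prod.cong)
        have mem: "tt y \<in> cbox 0 1 \<longleftrightarrow> y \<in> {0..1} \<and> (\<forall>i\<in>UNIV - {j}. c i \<in> {0..1})"
          by (auto simp: tt_def mem_box_cart split: if_splits)
        show ?thesis
          by (cases "y \<in> {0..1}"; cases "\<forall>i\<in>UNIV - {j}. c i \<in> {0..1}")
             (auto simp: K_def Cst_def Wt indicator_def mem)
      qed
      have "(LINT y|lborel. K (\<phi> (x(bj := y)))) = (LINT y|lborel. Cst * (indicator {0..1} y *\<^sub>R (g (tt y) * om (\<kappa> j) y)))"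
        by (simp add: \<phi>x Keq)
      also have "\<dots> = Cst * (LINT y|lborel. indicator {0..1} y *\<^sub>R (g (tt y) * om (\<kappa> j) y))"
        by (rule integral_mult_right_zero)
      also have "\<dots> = 0" using one[of c] by (simp add: tt_def)
      finally show "(LINT y|lborel. K (\<phi> (x(bj := y)))) = 0" .
    qed
    have "(LINT f|(\<Pi>\<^sub>M b\<in>Basis. lborel). K (\<phi> f))
        = (LINT x|(\<Pi>\<^sub>M b\<in>Basis - {bj}. lborel). (LINT y|lborel. K (\<phi> (x(bj := y)))))"
      using P.product_integral_insert[of "Basis - {bj}" bj "\<lambda>f. K (\<phi> f)"] int2 B by simp
    also have "\<dots> = 0" by (simp add: inner)
    finally show ?thesis .
  qed
  finally show ?thesis .
qed




lemma hmap_lin: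
  "hmap \<alpha> t (x + s *\<^sub>R \<xi>) = hmap \<alpha> t x + s *\<^sub>R hmap \<alpha> t \<xi>"
proof -
  have tw: "((t $ j - 1) * inner (x + s *\<^sub>R \<xi>) (\<alpha> j) / (norm (\<alpha> j))\<^sup>2) *\<^sub>R \<alpha> j
     = ((t $ j - 1) * inner x (\<alpha> j) / (norm (\<alpha> j))\<^sup>2) *\<^sub>R \<alpha> j
       + s *\<^sub>R (((t $ j - 1) * inner \<xi> (\<alpha> j) / (norm (\<alpha> j))\<^sup>2) *\<^sub>R \<alpha> j)" for j
    by (simp add: inner_add_left ring_distribs add_divide_distrib scaleR_add_left[symmetric])
  show ?thesis
    unfolding hmap_def tw sum.distrib scaleR_sum_right[symmetric]
    by (simp add: algebra_simps)
qed

lemma hmap_cont: "continuous_on UNIV (\<lambda>t. hmap \<alpha> t y)"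
  unfolding hmap_def divide_inverse by (intro continuous_intros)

lemma cont_nth: "continuous_on UNIV (\<lambda>t::real^'n::finite. t $ j)"
  by (intro continuous_intros)

lemma hmap_split:
  fixes \<alpha> :: "'n::finite \<Rightarrow> 'a::real_inner"
  shows "hmap \<alpha> t x = x + ((t $ j - 1) * inner x (\<alpha> j) / (norm (\<alpha> j))\<^sup>2) *\<^sub>R \<alpha> j
     + (\<Sum>k\<in>UNIV - {j}. ((t $ k - 1) * inner x (\<alpha> k) / (norm (\<alpha> k))\<^sup>2) *\<^sub>R \<alpha> k)"
  unfolding hmap_def by (subst sum.remove[of UNIV j]) auto

lemma hmap_tau:
  fixes \<alpha> :: "'n::finite \<Rightarrow> 'a::real_inner"
  assumes ortho: "\<And>i k. i \<noteq> k \<Longrightarrow> inner (\<alpha> i) (\<alpha> k) = 0" and nz: "\<alpha> j \<noteq> 0"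
  shows "hmap \<alpha> t (tau (\<alpha> j) x) = hmap \<alpha> (\<chi> k. if k = j then 0 else t $ k) x"
proof -
  have inn: "inner (tau (\<alpha> j) x) (\<alpha> k) = (if k = j then 0 else inner x (\<alpha> k))" for k
  proof (cases "k = j")
    case True
    have "inner (\<alpha> j) (\<alpha> j) = (norm (\<alpha> j))\<^sup>2" by (simp add: power2_norm_eq_inner)
    then show ?thesis using True nz by (simp add: tau_def inner_diff_left)
  next
    case False
    then show ?thesis using ortho[of j k] by (simp add: tau_def inner_diff_left)
  qed
  have "hmap \<alpha> t (tau (\<alpha> j) x) = tau (\<alpha> j) x
     + (\<Sum>k\<in>UNIV - {j}. ((t $ k - 1) * inner x (\<alpha> k) / (norm (\<alpha> k))\<^sup>2) *\<^sub>R \<alpha> k)"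
    by (subst hmap_split[of _ _ _ j]) (simp add: inn)
  also have "\<dots> = hmap \<alpha> (\<chi> k. if k = j then 0 else t $ k) x"
    by (subst hmap_split[of _ _ _ j]) (simp add: tau_def)
  finally show ?thesis .
qed

lemma hmap_line:
  fixes \<alpha> :: "'n::finite \<Rightarrow> 'a::real_inner"
  shows "hmap \<alpha> (\<chi> k. if k = j then y else c k) x
     = hmap \<alpha> (\<chi> k. if k = j then 0 else c k) x + y *\<^sub>R ((inner x (\<alpha> j) / (norm (\<alpha> j))\<^sup>2) *\<^sub>R \<alpha> j)"
proof -
  have "(\<Sum>k\<in>UNIV - {j}. (((\<chi> k. if k = j then y else c k) $ k - 1) * inner x (\<alpha> k) / (norm (\<alpha> k))\<^sup>2) *\<^sub>R \<alpha> k)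
      = (\<Sum>k\<in>UNIV - {j}. (((\<chi> k. if k = j then 0 else c k) $ k - 1) * inner x (\<alpha> k) / (norm (\<alpha> k))\<^sup>2) *\<^sub>R \<alpha> k)"
    by (intro sum.cong refl) auto
  then show ?thesis
    by (simp only: hmap_split[of _ _ _ j]) (simp add: algebra_simps scaleR_add_left[symmetric] diff_divide_distrib)
qed




lemma line_deriv:
  fixes f :: "'a::euclidean_space \<Rightarrow> complex"
  assumes df: "\<And>y. f differentiable (at y)"
  shows "((\<lambda>s. f (A + s *\<^sub>R e)) has_vector_derivative frechet_derivative f (at (A + r *\<^sub>R e)) e) (at r)"
proof -
  have "((\<lambda>y. A + y *\<^sub>R e) has_derivative (\<lambda>i. i *\<^sub>R e)) (at r)"
    by (auto intro!: derivative_eq_intros)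
  from has_derivative_compose[OF this, of f] df[of "A + r *\<^sub>R e"]
  have "((\<lambda>y. f (A + y *\<^sub>R e)) has_derivative (\<lambda>i. frechet_derivative f (at (A + r *\<^sub>R e)) (i *\<^sub>R e))) (at r)"
    unfolding frechet_derivative_works by simp
  moreover have "linear (frechet_derivative f (at (A + r *\<^sub>R e)))"
    using df frechet_derivative_works has_derivative_linear by blast
  ultimately have "((\<lambda>y. f (A + y *\<^sub>R e)) has_derivative (\<lambda>i. i *\<^sub>R frechet_derivative f (at (A + r *\<^sub>R e)) e)) (at r)"
    by (simp add: linear_scale)
  then show ?thesis unfolding has_vector_derivative_def .
qed

lemma dir_deriv_eq:
  fixes f :: "'a::euclidean_space \<Rightarrow> complex"
  assumes df: "\<And>y. f differentiable (at y)"
  shows "dir_deriv f \<xi> y = frechet_derivative f (at y) \<xi>"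
  unfolding dir_deriv_def using line_deriv[OF df, of y \<xi> 0]
  by (simp add: vector_derivative_at)

theorem theorem4p1:
  fixes R :: "'a::euclidean_space set"
    and \<alpha> :: "'n::finite \<Rightarrow> 'a"
    and \<kappa> :: "'n \<Rightarrow> complex"
    and f :: "'a \<Rightarrow> complex"
    and \<xi> x :: 'a
  assumes "root_system R"
    and "inj \<alpha>"
    and "positive_orthogonal_subsystem (range \<alpha>) R"
    and "\<forall>j. Re (\<kappa> j) > 0"
    and "smooth f"
    and "\<forall>j. inner x (\<alpha> j) \<noteq> 0"
  shows "\<exists>D. has_dir_deriv (chi \<kappa> \<alpha> f) \<xi> x D \<and>
           Dunkl_T \<kappa> \<alpha> \<xi> (chi \<kappa> \<alpha> f) x D = chi \<kappa> \<alpha> (\<lambda>y. dir_deriv f \<xi> y) x"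
proof -
  have pos: "\<forall>j. Re (\<kappa> j) > 0" using assms(4) .
  have ortho: "inner (\<alpha> i) (\<alpha> k) = 0" if ik: "i \<noteq> k" for i k
  proof -
    obtain S'' where os: "orthogonal_subsystem S'' R" and S: "S'' = range \<alpha> \<union> uminus ` range \<alpha>"
      and dis: "range \<alpha> \<inter> uminus ` range \<alpha> = {}"
      using assms(3) unfolding positive_orthogonal_subsystem_def by blast
    have "\<alpha> k \<noteq> \<alpha> i" using ik assms(2) by (metis injD)
    moreover have "\<alpha> k \<noteq> - \<alpha> i"
    proof
      assume a: "\<alpha> k = - \<alpha> i"
      have "\<alpha> k \<in> uminus ` range \<alpha>" unfolding a by (intro imageI rangeI)
      then have "\<alpha> k \<in> range \<alpha> \<inter> uminus ` range \<alpha>" by auto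
      with dis show False by simp
    qed
    ultimately show ?thesis using os S unfolding orthogonal_subsystem_def by auto
  qed
  have xa: "\<And>j. inner x (\<alpha> j) \<noteq> 0" using assms(6) by blast
  have nz: "\<alpha> j \<noteq> 0" for j using xa[of j] by auto
  have C1: "C_k (Suc 0) f" using assms(5) unfolding smooth_def by blast
  then have dfo: "f differentiable_on UNIV"
    and cd0: "\<And>w. continuous_on UNIV (\<lambda>y. frechet_derivative f (at y) w)" by simp_all
  have df: "\<And>y. f differentiable (at y)" using dfo by (simp add: differentiable_on_def)
  have cf: "continuous_on UNIV f"
    using dfo by (simp add: differentiable_imp_continuous_on)
  define G where "G = 1 / (\<Prod>j\<in>UNIV. Gamma (\<kappa> j))"
  define h where "h t = hmap \<alpha> t x" for t
  define F where "F t = f (h t)" for t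
  define F0 where "F0 j t = f (hmap \<alpha> t (tau (\<alpha> j) x))" for j t
  define P where "P j = II \<kappa> (\<lambda>t. (1 - of_real (t $ j)) * frechet_derivative f (at (h t)) (\<alpha> j))" for j
  define nn where "nn j = (norm (\<alpha> j))\<^sup>2" for j
  have chi_eq: "chi \<kappa> \<alpha> g y = G * II \<kappa> (\<lambda>t. g (hmap \<alpha> t y))" if "continuous_on UNIV g" for g y
    unfolding chi_def G_def
    by (subst II_integral[OF pos]) (auto intro: continuous_on_compose2[OF that hmap_cont])
  have ch: "continuous_on UNIV h" unfolding h_def by (rule hmap_cont)
  have cF: "continuous_on UNIV F" unfolding F_def by (rule continuous_on_compose2[OF cf ch]) auto
  have cF0: "continuous_on UNIV (F0 j)" for j
    unfolding F0_def by (rule continuous_on_compose2[OF cf hmap_cont]) auto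
  have cDf: "continuous_on UNIV (\<lambda>t. frechet_derivative f (at (h t)) w)" for w
    by (rule Df_cont[OF df cd0 ch continuous_on_const])
  have cPj: "continuous_on UNIV (\<lambda>t. (1 - of_real (t $ j)) * frechet_derivative f (at (h t)) (\<alpha> j))" for j
    by (intro continuous_intros cDf)
  have lin: "linear (frechet_derivative f (at y))" for y
    using df frechet_derivative_works has_derivative_linear by blast

  \<comment> \<open>(B): the integration by parts in the j-th variable\<close>
  have B: "of_real (inner x (\<alpha> j) / nn j) * P j = \<kappa> j * (II \<kappa> F - II \<kappa> (F0 j))" for j
  proof -
    define u where "u = inner x (\<alpha> j) / nn j"
    define e where "e = u *\<^sub>R \<alpha> j"
    define gj where "gj t = (1 - of_real (t $ j)) * frechet_derivative f (at (h t)) e - \<kappa> j * (F t - F0 j t)" for t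
    have cg: "continuous_on UNIV gj" unfolding gj_def
      by (intro continuous_intros cDf cF cF0)
    have "II \<kappa> gj = 0"
    proof (rule fub[OF pos cg])
      fix c :: "'n \<Rightarrow> real"
      define A where "A = hmap \<alpha> (\<chi> k. if k = j then 0 else c k) x"
      have "gj (\<chi> k. if k = j then y else c k) =
         ((1 - of_real y) * frechet_derivative f (at (A + y *\<^sub>R e)) e - \<kappa> j * (f (A + y *\<^sub>R e) - f A))" for y
      proof -
        have h1: "h (\<chi> k. if k = j then y else c k) = A + y *\<^sub>R e"
          unfolding h_def A_def e_def u_def nn_def by (rule hmap_line)
        have h2: "(\<chi> k. if k = j then 0 else (\<chi> k. if k = j then y else c k) $ k) = (\<chi> k. if k = j then 0 else c k)"
          by (simp add: vec_eq_iff)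
        have h3: "F0 j (\<chi> k. if k = j then y else c k) = f A"
        proof -
          have "hmap \<alpha> (\<chi> k. if k = j then y else c k) (tau (\<alpha> j) x)
              = hmap \<alpha> (\<chi> k. if k = j then 0 else (\<chi> k. if k = j then y else c k) $ k) x"
            by (rule hmap_tau[OF ortho nz])
          then show ?thesis unfolding F0_def A_def h2 by simp
        qed
        show ?thesis unfolding gj_def h3 by (simp add: F_def h1)
      qed
      then show "(LINT y|lborel. indicator {0..1} y *\<^sub>R (gj (\<chi> k. if k = j then y else c k) * om (\<kappa> j) y)) = 0"
        using ibp1[OF df, of "\<kappa> j" A e] pos by simp
    qed
    moreover have "II \<kappa> gj = II \<kappa> (\<lambda>t. (1 - of_real (t $ j)) * frechet_derivative f (at (h t)) e) - \<kappa> j * (II \<kappa> F - II \<kappa> (F0 j))"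
      unfolding gj_def
      by (subst II_diff[OF pos]; (intro continuous_intros cDf cF cF0)?)
         (simp add: II_cmult II_diff[OF pos cF cF0])
    moreover have "II \<kappa> (\<lambda>t. (1 - of_real (t $ j)) * frechet_derivative f (at (h t)) e) = of_real u * P j"
    proof -
      have "(\<lambda>t. (1 - of_real (t $ j)) * frechet_derivative f (at (h t)) e)
          = (\<lambda>t. of_real u * ((1 - of_real (t $ j)) * frechet_derivative f (at (h t)) (\<alpha> j)))"
        by (auto simp: e_def linear_scale[OF lin] scaleR_conv_of_real)
      then show ?thesis by (simp add: II_cmult P_def)
    qed
    ultimately show ?thesis by (simp add: u_def)
  qed

  define D where "D = G * II \<kappa> (\<lambda>t. frechet_derivative f (at (h t)) (hmap \<alpha> t \<xi>))"
  have hd: "has_dir_deriv (chi \<kappa> \<alpha> f) \<xi> x D"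
  proof -
    have eq: "(\<lambda>s. chi \<kappa> \<alpha> f (x + s *\<^sub>R \<xi>)) = (\<lambda>s. G * II \<kappa> (\<lambda>t. f (h t + s *\<^sub>R hmap \<alpha> t \<xi>)))"
      by (rule ext) (simp add: chi_eq[OF cf] hmap_lin h_def)
    have "((\<lambda>s. II \<kappa> (\<lambda>t. f (h t + s *\<^sub>R hmap \<alpha> t \<xi>))) has_vector_derivative
            II \<kappa> (\<lambda>t. frechet_derivative f (at (h t)) (hmap \<alpha> t \<xi>))) (at 0)"
      by (rule II_deriv[OF pos df cd0 ch hmap_cont])
    then show ?thesis
      unfolding has_dir_deriv_def eq D_def by (rule has_vector_derivative_mult_right)
  qed

  define c where "c j = inner \<xi> (\<alpha> j) / nn j" for j
  have expand: "frechet_derivative f (at (h t)) (hmap \<alpha> t \<xi>) = frechet_derivative f (at (h t)) \<xi>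
      - (\<Sum>j\<in>UNIV. of_real (c j) * ((1 - of_real (t $ j)) * frechet_derivative f (at (h t)) (\<alpha> j)))" for t
  proof -
    have "frechet_derivative f (at (h t)) (hmap \<alpha> t \<xi>) = frechet_derivative f (at (h t)) \<xi>
       + (\<Sum>j\<in>UNIV. ((t $ j - 1) * inner \<xi> (\<alpha> j) / nn j) *\<^sub>R frechet_derivative f (at (h t)) (\<alpha> j))"
      unfolding hmap_def nn_def by (simp add: linear_add[OF lin] linear_sum[OF lin] linear_scale[OF lin] comp_def)
    also have "\<dots> = frechet_derivative f (at (h t)) \<xi>
      - (\<Sum>j\<in>UNIV. of_real (c j) * ((1 - of_real (t $ j)) * frechet_derivative f (at (h t)) (\<alpha> j)))"
    proof -
      have tw: "((t $ j - 1) * inner \<xi> (\<alpha> j) / nn j) *\<^sub>R frechet_derivative f (at (h t)) (\<alpha> j)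
          = - (of_real (c j) * ((1 - of_real (t $ j)) * frechet_derivative f (at (h t)) (\<alpha> j)))" for j
      proof -
        have r: "(t $ j - 1) * inner \<xi> (\<alpha> j) / nn j = - (c j * (1 - t $ j))"
          by (simp add: c_def algebra_simps diff_divide_distrib)
        show ?thesis unfolding r by (simp add: scaleR_conv_of_real algebra_simps)
      qed
      show ?thesis unfolding tw sum_negf by simp
    qed
    finally show ?thesis .
  qed
  have IID: "II \<kappa> (\<lambda>t. frechet_derivative f (at (h t)) (hmap \<alpha> t \<xi>))
      = II \<kappa> (\<lambda>t. frechet_derivative f (at (h t)) \<xi>) - (\<Sum>j\<in>UNIV. of_real (c j) * P j)"
  proof -
    have cs: "continuous_on UNIV (\<lambda>t. \<Sum>j\<in>UNIV. of_real (c j) * ((1 - of_real (t $ j)) * frechet_derivative f (at (h t)) (\<alpha> j)))"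
      by (intro continuous_intros cDf)
    show ?thesis
      unfolding expand
      by (simp add: II_diff[OF pos cDf cs] II_sum[OF pos] cPj II_cmult P_def continuous_intros cDf)
  qed
  have dd: "chi \<kappa> \<alpha> (\<lambda>y. dir_deriv f \<xi> y) x = G * II \<kappa> (\<lambda>t. frechet_derivative f (at (h t)) \<xi>)"
  proof -
    have "(\<lambda>y. dir_deriv f \<xi> y) = (\<lambda>y. frechet_derivative f (at y) \<xi>)"
      by (rule ext) (rule dir_deriv_eq[OF df])
    moreover have "continuous_on UNIV (\<lambda>y. frechet_derivative f (at y) \<xi>)" by (rule cd0)
    ultimately show ?thesis by (simp add: chi_eq h_def)
  qed
  have tmj: "\<kappa> j * of_real (inner (\<alpha> j) \<xi>) * (chi \<kappa> \<alpha> f x - chi \<kappa> \<alpha> f (tau (\<alpha> j) x)) / of_real (inner x (\<alpha> j))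
      = G * (of_real (c j) * P j)" for j
  proof -
    have e1: "chi \<kappa> \<alpha> f x - chi \<kappa> \<alpha> f (tau (\<alpha> j) x) = G * (II \<kappa> F - II \<kappa> (F0 j))"
      by (simp add: chi_eq[OF cf] F_def[abs_def] F0_def[abs_def] h_def right_diff_distrib)
    have "\<kappa> j * of_real (inner (\<alpha> j) \<xi>) * (chi \<kappa> \<alpha> f x - chi \<kappa> \<alpha> f (tau (\<alpha> j) x)) / of_real (inner x (\<alpha> j))
       = G * of_real (inner (\<alpha> j) \<xi>) * (\<kappa> j * (II \<kappa> F - II \<kappa> (F0 j))) / of_real (inner x (\<alpha> j))"
      unfolding e1 by (simp add: algebra_simps)
    also have "\<dots> = G * of_real (inner (\<alpha> j) \<xi>) * (of_real (inner x (\<alpha> j) / nn j) * P j) / of_real (inner x (\<alpha> j))"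
      by (simp only: B)
    also have "\<dots> = G * (of_real (c j) * P j)"
      using xa[of j] by (simp add: c_def inner_commute field_simps)
    finally show ?thesis .
  qed
  have "Dunkl_T \<kappa> \<alpha> \<xi> (chi \<kappa> \<alpha> f) x D = D + (\<Sum>j\<in>UNIV. G * (of_real (c j) * P j))"
    unfolding Dunkl_T_def using tmj by simp
  also have "\<dots> = G * II \<kappa> (\<lambda>t. frechet_derivative f (at (h t)) \<xi>)"
  proof -
    have "(\<Sum>j\<in>UNIV. G * (of_real (c j) * P j)) = G * (\<Sum>j\<in>UNIV. of_real (c j) * P j)"
      by (rule sum_distrib_left[symmetric])
    then show ?thesis unfolding D_def IID by (simp add: right_diff_distrib)
  qed
  also have "\<dots> = chi \<kappa> \<alpha> (\<lambda>y. dir_deriv f \<xi> y) x" using dd by simp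
  finally show ?thesis using hd by blast
qed


end
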